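(* Let $M:\mathbb M\to\mathbb{P}\mathrm{b}$ be a cartesian multicategory. Let $\alpha:X\to Z$ be a loose arrow and $f:X\to Y$ a tight arrow of $\mathbb M$ such that $M_0f$ is a bijection, let $g=f^{-1}$ (the inverse tight arrow, lying over $(M_0f)^{-1}$), and let $h=M_l\alpha\circ(M_0f)^{-1}:M_0Y\to M_0Z$. Then the covariant reindexing $f^h_!\alpha$ coincides with the contravariant reindexing $g^*\alpha$, i.e. with the left loose side of the unique cell of $\mathbb M$ having right side $\alpha$, top $g$ and bottom $\mathrm{id}_Z$.
   Context: All double categories are strict; a double category $\mathbb A$ has tight category $\mathbb A_0$, a category $\mathbb A_1$ of loose arrows and cells, $s,t:\mathbb A_1\to\mathbb A_0$, and associative unital loose composition; a cell has left/right loose sides (domain/codomain in $\mathbb A_1$) and top/bottom tight sides. $\mathbb{P}\mathrm{b}$ is the double category of finite sets with maps as tight and loose arrows and pullback squares as cells (left side $f:I\to J$, right side $g:L\to K$, top $k:I\to L$, bottom $l:J\to K$, with $gk=lf$ a pullback). A symmetric multicategory is a double category $\mathbb M$ whose $\mathbb M_0,\mathbb M_1$ have finite sums preserved by $s,t$, with a double functor $M:\mathbb M\to\mathbb{P}\mathrm{b}$ whose components $M_0:\mathbb M_0\to\mathrm{Set}_f$, $M_1:\mathbb M_1\to\mathbb{P}\mathrm{b}_1$ preserve finite sums and are discrete fibrations ($M_l$ = action on loose arrows). Thus each pullback square in $\mathrm{Set}_f$ with right side $M_l\beta$ lifts uniquely to a cell with right side $\beta$. Cartesian multicategory (covariant reindexing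 form, given in the paper as equivalent to being an algebra for its monad $(-)^{\mathrm{cart}}$): a symmetric multicategory with an assignment, to each loose $\alpha:X\to Z$, tight $f:X\to Y$ and map $h:M_0Y\to M_0Z$ with $h\circ M_0f=M_l\alpha$, of a loose $f^h_!\alpha:Y\to Z$ with $M_l(f^h_!\alpha)=h$, satisfying: (U) $(\mathrm{id}_X)^{M_l\alpha}_!\alpha=\alpha$; (Functoriality) $f^h_!(g^{h'}_!\alpha)=(fg)^h_!\alpha$ for tight $g:X\to Y$, $f:Y\to W$, maps $h'\circ M_0g=M_l\alpha$, $h\circ M_0f=h'$; (Frobenius) for a cell with left side $\gamma:W\to V$, right side $\alpha:X\to Y$, top $k$, bottom $g:V\to Y$, loose $\beta:V\to Z$ and map $m$ with $m\circ M_0g=M_l\beta$: $k^{m\circ M_l\alpha}_!(\beta\gamma)=(g^m_!\beta)\alpha$; (Tailing) for loose $\alpha:U\to Y$, tight $f:U\to X$, $m\circ M_0f=M_l\alpha$, loose $\beta:Y\to Z$: $f^{M_l\beta\circ m}_!(\beta\alpha)=\beta\circ f^m_!\alpha$; (Beck–Chevalley) if $\delta=f^h_!\alpha$ ($\alpha:X\to Z$, $f:X\to Y$), $c_1$ is a cell with right side $\alpha$, bottom tight $g:Z'\to Z$, left side $\alpha':X'\to Z'$, top $x$, and $c_2$ is a cell with right side $\delta$, bottom $g$, left side $\delta':Y'\to Z'$, top $y$, and $f':X'\to Y'$ is tight with $yf'=fx$ and $M_l\delta'\circ M_0f'=M_l\alpha'$, then $\delta'=f'^{M_l\delta'}_!\alpha'$.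 *)

theory Defs
  imports "HOL-Library.FuncSet"
begin

section \<open>Categories given by total types with partial composition\<close>

definition category :: "('a \<Rightarrow> 'o) \<Rightarrow> ('a \<Rightarrow> 'o) \<Rightarrow> ('a \<Rightarrow> 'a \<Rightarrow> 'a) \<Rightarrow> ('o \<Rightarrow> 'a) \<Rightarrow> bool" where
  "category dm cd cmp idt \<longleftrightarrow>
     (\<forall>X. dm (idt X) = X \<and> cd (idt X) = X) \<and>
     (\<forall>f g. cd f = dm g \<longrightarrow> dm (cmp g f) = dm f \<and> cd (cmp g f) = cd g) \<and>
     (\<forall>f g h. cd f = dm g \<and> cd g = dm h \<longrightarrow> cmp h (cmp g f) = cmp (cmp h g) f) \<and>
     (\<forall>f. cmp (idt (cd f)) f = f \<and> cmp f (idt (dm f)) = f)"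

definition is_functor ::
  "('a \<Rightarrow> 'o) \<Rightarrow> ('a \<Rightarrow> 'o) \<Rightarrow> ('a \<Rightarrow> 'a \<Rightarrow> 'a) \<Rightarrow> ('o \<Rightarrow> 'a) \<Rightarrow>
   ('b \<Rightarrow> 'p) \<Rightarrow> ('b \<Rightarrow> 'p) \<Rightarrow> ('b \<Rightarrow> 'b \<Rightarrow> 'b) \<Rightarrow> ('p \<Rightarrow> 'b) \<Rightarrow>
   ('o \<Rightarrow> 'p) \<Rightarrow> ('a \<Rightarrow> 'b) \<Rightarrow> bool" where
  "is_functor dm cd cmp idt dm' cd' cmp' idt' Fo Fa \<longleftrightarrow>
     (\<forall>f. dm' (Fa f) = Fo (dm f) \<and> cd' (Fa f) = Fo (cd f)) \<and>
     (\<forall>f g. cd f = dm g \<longrightarrow> Fa (cmp g f) = cmp' (Fa g) (Fa f)) \<and>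
     (\<forall>X. Fa (idt X) = idt' (Fo X))"

definition is_initial :: "('a \<Rightarrow> 'o) \<Rightarrow> ('a \<Rightarrow> 'o) \<Rightarrow> 'o \<Rightarrow> bool" where
  "is_initial dm cd I0 \<longleftrightarrow> (\<forall>Z. \<exists>!w. dm w = I0 \<and> cd w = Z)"

definition is_coproduct ::
  "('a \<Rightarrow> 'o) \<Rightarrow> ('a \<Rightarrow> 'o) \<Rightarrow> ('a \<Rightarrow> 'a \<Rightarrow> 'a) \<Rightarrow> 'o \<Rightarrow> 'o \<Rightarrow> 'o \<Rightarrow> 'a \<Rightarrow> 'a \<Rightarrow> bool" where
  "is_coproduct dm cd cmp A B S i1 i2 \<longleftrightarrow>
     dm i1 = A \<and> cd i1 = S \<and> dm i2 = B \<and> cd i2 = S \<and>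
     (\<forall>Z u v. dm u = A \<and> cd u = Z \<and> dm v = B \<and> cd v = Z \<longrightarrow>
        (\<exists>!w. dm w = S \<and> cd w = Z \<and> cmp w i1 = u \<and> cmp w i2 = v))"

definition has_finite_sums :: "('a \<Rightarrow> 'o) \<Rightarrow> ('a \<Rightarrow> 'o) \<Rightarrow> ('a \<Rightarrow> 'a \<Rightarrow> 'a) \<Rightarrow> bool" where
  "has_finite_sums dm cd cmp \<longleftrightarrow>
     (\<exists>I0. is_initial dm cd I0) \<and> (\<forall>A B. \<exists>S i1 i2. is_coproduct dm cd cmp A B S i1 i2)"

definition preserves_sums ::
  "('a \<Rightarrow> 'o) \<Rightarrow> ('a \<Rightarrow> 'o) \<Rightarrow> ('a \<Rightarrow> 'a \<Rightarrow> 'a) \<Rightarrow>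
   ('b \<Rightarrow> 'p) \<Rightarrow> ('b \<Rightarrow> 'p) \<Rightarrow> ('b \<Rightarrow> 'b \<Rightarrow> 'b) \<Rightarrow> ('o \<Rightarrow> 'p) \<Rightarrow> ('a \<Rightarrow> 'b) \<Rightarrow> bool" where
  "preserves_sums dm cd cmp dm' cd' cmp' Fo Fa \<longleftrightarrow>
     (\<forall>I0. is_initial dm cd I0 \<longrightarrow> is_initial dm' cd' (Fo I0)) \<and>
     (\<forall>A B S i1 i2. is_coproduct dm cd cmp A B S i1 i2 \<longrightarrow>
        is_coproduct dm' cd' cmp' (Fo A) (Fo B) (Fo S) (Fa i1) (Fa i2))"

text \<open>Coproduct cocones in the category of finite sets (maps are extensional functions).\<close>
definition set_coproduct :: "'e set \<Rightarrow> 'e set \<Rightarrow> 'e set \<Rightarrow> ('e \<Rightarrow> 'e) \<Rightarrow> ('e \<Rightarrow> 'e) \<Rightarrow> bool" where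
  "set_coproduct A B S u v \<longleftrightarrow>
     inj_on u A \<and> inj_on v B \<and> u ` A \<inter> v ` B = {} \<and> u ` A \<union> v ` B = S"

text \<open>A commutative square in finite sets which is a pullback:
  left f : I \<rightarrow> J, right g : L \<rightarrow> K, top k : I \<rightarrow> L, bottom l : J \<rightarrow> K.\<close>
definition is_pullback ::
  "'e set \<Rightarrow> 'e set \<Rightarrow> 'e set \<Rightarrow> 'e set \<Rightarrow> ('e \<Rightarrow> 'e) \<Rightarrow> ('e \<Rightarrow> 'e) \<Rightarrow> ('e \<Rightarrow> 'e) \<Rightarrow> ('e \<Rightarrow> 'e) \<Rightarrow> bool" where
  "is_pullback I J L K f g k l \<longleftrightarrow>
     (\<forall>i\<in>I. g (k i) = l (f i)) \<and>
     bij_betw (\<lambda>i. (f i, k i)) I {(j, x). j \<in> J \<and> x \<in> L \<and> l j = g x}"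

record ('o, 't, 'l, 'c) dbl =
  tdom :: "'t \<Rightarrow> 'o"
  tcod :: "'t \<Rightarrow> 'o"
  tcomp :: "'t \<Rightarrow> 't \<Rightarrow> 't"   \<comment> \<open>tcomp g f = g \<circ> f\<close>
  tid :: "'o \<Rightarrow> 't"
  lsrc :: "'l \<Rightarrow> 'o"
  ltgt :: "'l \<Rightarrow> 'o"
  lcomp :: "'l \<Rightarrow> 'l \<Rightarrow> 'l"   \<comment> \<open>lcomp \<beta> \<alpha> = \<beta>\<alpha>, loose composition\<close>
  lid :: "'o \<Rightarrow> 'l"
  cleft :: "'c \<Rightarrow> 'l"        \<comment> \<open>domain in A_1\<close>
  cright :: "'c \<Rightarrow> 'l"       \<comment> \<open>codomain in A_1\<close>
  ctop :: "'c \<Rightarrow> 't"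
  cbot :: "'c \<Rightarrow> 't"
  ccomp :: "'c \<Rightarrow> 'c \<Rightarrow> 'c"
  cid :: "'l \<Rightarrow> 'c"
  chcomp :: "'c \<Rightarrow> 'c \<Rightarrow> 'c"
  chid :: "'t \<Rightarrow> 'c"

definition double_category :: "('o, 't, 'l, 'c, 'z) dbl_scheme \<Rightarrow> bool" where
  "double_category A \<longleftrightarrow>
     category (tdom A) (tcod A) (tcomp A) (tid A) \<and>
     category (cleft A) (cright A) (ccomp A) (cid A) \<and>
     is_functor (cleft A) (cright A) (ccomp A) (cid A) (tdom A) (tcod A) (tcomp A) (tid A) (lsrc A) (ctop A) \<and>
     is_functor (cleft A) (cright A) (ccomp A) (cid A) (tdom A) (tcod A) (tcomp A) (tid A) (ltgt A) (cbot A) \<and>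
     (\<forall>\<alpha> \<beta>. ltgt A \<alpha> = lsrc A \<beta> \<longrightarrow>
        lsrc A (lcomp A \<beta> \<alpha>) = lsrc A \<alpha> \<and> ltgt A (lcomp A \<beta> \<alpha>) = ltgt A \<beta>) \<and>
     (\<forall>X. lsrc A (lid A X) = X \<and> ltgt A (lid A X) = X) \<and>
     (\<forall>c d. ctop A d = cbot A c \<longrightarrow>
        cleft A (chcomp A d c) = lcomp A (cleft A d) (cleft A c) \<and>
        cright A (chcomp A d c) = lcomp A (cright A d) (cright A c) \<and>
        ctop A (chcomp A d c) = ctop A c \<and> cbot A (chcomp A d c) = cbot A d) \<and>
     (\<forall>f. cleft A (chid A f) = lid A (tdom A f) \<and> cright A (chid A f) = lid A (tcod A f) \<and>
        ctop A (chid A f) = f \<and> cbot A (chid A f) = f) \<and>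
     (\<forall>c c' d d'. cright A c = cleft A c' \<and> cright A d = cleft A d' \<and>
        ctop A d = cbot A c \<and> ctop A d' = cbot A c' \<longrightarrow>
        chcomp A (ccomp A d' d) (ccomp A c' c) = ccomp A (chcomp A d' c') (chcomp A d c)) \<and>
     (\<forall>\<alpha> \<beta>. ltgt A \<alpha> = lsrc A \<beta> \<longrightarrow> chcomp A (cid A \<beta>) (cid A \<alpha>) = cid A (lcomp A \<beta> \<alpha>)) \<and>
     (\<forall>f g. tcod A f = tdom A g \<longrightarrow> chid A (tcomp A g f) = ccomp A (chid A g) (chid A f)) \<and>
     (\<forall>X. chid A (tid A X) = cid A (lid A X)) \<and>
     (\<forall>\<alpha> \<beta> \<gamma>. ltgt A \<alpha> = lsrc A \<beta> \<and> ltgt A \<beta> = lsrc A \<gamma> \<longrightarrow>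
        lcomp A \<gamma> (lcomp A \<beta> \<alpha>) = lcomp A (lcomp A \<gamma> \<beta>) \<alpha>) \<and>
     (\<forall>c d e. ctop A d = cbot A c \<and> ctop A e = cbot A d \<longrightarrow>
        chcomp A e (chcomp A d c) = chcomp A (chcomp A e d) c) \<and>
     (\<forall>\<alpha>. lcomp A (lid A (ltgt A \<alpha>)) \<alpha> = \<alpha> \<and> lcomp A \<alpha> (lid A (lsrc A \<alpha>)) = \<alpha>) \<and>
     (\<forall>c. chcomp A (chid A (cbot A c)) c = c \<and> chcomp A c (chid A (ctop A c)) = c)"

section \<open>Symmetric multicategories: double functors into Pb\<close>

text \<open>The double is_functor M : A \<rightarrow> Pb is given by Mob (objects to finite subsets of 'e),
  Mt (tight arrows to maps, as extensional functions) and Ml (loose arrows to maps).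
  Since cells of Pb are determined by their boundary, the action on cells is
  determined; the requirement is that the image of every cell is a pullback square.\<close>

definition double_functor_to_Pb ::
  "('o, 't, 'l, 'c, 'z) dbl_scheme \<Rightarrow> ('o \<Rightarrow> 'e set) \<Rightarrow> ('t \<Rightarrow> 'e \<Rightarrow> 'e) \<Rightarrow> ('l \<Rightarrow> 'e \<Rightarrow> 'e) \<Rightarrow> bool" where
  "double_functor_to_Pb A Mob Mt Ml \<longleftrightarrow>
     (\<forall>X. finite (Mob X)) \<and>
     (\<forall>f. Mt f \<in> Mob (tdom A f) \<rightarrow>\<^sub>E Mob (tcod A f)) \<and>
     (\<forall>f g. tcod A f = tdom A g \<longrightarrow> Mt (tcomp A g f) = compose (Mob (tdom A f)) (Mt g) (Mt f)) \<and>
     (\<forall>X. Mt (tid A X) = restrict id (Mob X)) \<and>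
     (\<forall>\<alpha>. Ml \<alpha> \<in> Mob (lsrc A \<alpha>) \<rightarrow>\<^sub>E Mob (ltgt A \<alpha>)) \<and>
     (\<forall>\<alpha> \<beta>. ltgt A \<alpha> = lsrc A \<beta> \<longrightarrow> Ml (lcomp A \<beta> \<alpha>) = compose (Mob (lsrc A \<alpha>)) (Ml \<beta>) (Ml \<alpha>)) \<and>
     (\<forall>X. Ml (lid A X) = restrict id (Mob X)) \<and>
     (\<forall>c. is_pullback (Mob (lsrc A (cleft A c))) (Mob (ltgt A (cleft A c)))
                      (Mob (lsrc A (cright A c))) (Mob (ltgt A (cright A c)))
                      (Ml (cleft A c)) (Ml (cright A c)) (Mt (ctop A c)) (Mt (cbot A c)))"

definition M0_discrete_fibration ::
  "('o, 't, 'l, 'c, 'z) dbl_scheme \<Rightarrow> ('o \<Rightarrow> 'e set) \<Rightarrow> ('t \<Rightarrow> 'e \<Rightarrow> 'e) \<Rightarrow> bool" where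
  "M0_discrete_fibration A Mob Mt \<longleftrightarrow>
     (\<forall>Y I u. finite I \<and> u \<in> I \<rightarrow>\<^sub>E Mob Y \<longrightarrow>
        (\<exists>!f. tcod A f = Y \<and> Mob (tdom A f) = I \<and> Mt f = u))"

definition M1_discrete_fibration ::
  "('o, 't, 'l, 'c, 'z) dbl_scheme \<Rightarrow> ('o \<Rightarrow> 'e set) \<Rightarrow> ('t \<Rightarrow> 'e \<Rightarrow> 'e) \<Rightarrow> ('l \<Rightarrow> 'e \<Rightarrow> 'e) \<Rightarrow> bool" where
  "M1_discrete_fibration A Mob Mt Ml \<longleftrightarrow>
     (\<forall>\<beta> I J f k l. finite I \<and> finite J \<and> f \<in> I \<rightarrow>\<^sub>E J \<and>
        k \<in> I \<rightarrow>\<^sub>E Mob (lsrc A \<beta>) \<and> l \<in> J \<rightarrow>\<^sub>E Mob (ltgt A \<beta>) \<and>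
        is_pullback I J (Mob (lsrc A \<beta>)) (Mob (ltgt A \<beta>)) f (Ml \<beta>) k l \<longrightarrow>
        (\<exists>!c. cright A c = \<beta> \<and> Mob (lsrc A (cleft A c)) = I \<and> Mob (ltgt A (cleft A c)) = J \<and>
              Ml (cleft A c) = f \<and> Mt (ctop A c) = k \<and> Mt (cbot A c) = l))"

text \<open>Preservation of finite sums by M_0 (into finite sets) and M_1 (into Pb_1, where
  sums are computed componentwise on top and bottom).\<close>
definition M_preserves_sums ::
  "('o, 't, 'l, 'c, 'z) dbl_scheme \<Rightarrow> ('o \<Rightarrow> 'e set) \<Rightarrow> ('t \<Rightarrow> 'e \<Rightarrow> 'e) \<Rightarrow> bool" where
  "M_preserves_sums A Mob Mt \<longleftrightarrow>
     (\<forall>I0. is_initial (tdom A) (tcod A) I0 \<longrightarrow> Mob I0 = {}) \<and>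
     (\<forall>X Y S i1 i2. is_coproduct (tdom A) (tcod A) (tcomp A) X Y S i1 i2 \<longrightarrow>
        set_coproduct (Mob X) (Mob Y) (Mob S) (Mt i1) (Mt i2)) \<and>
     (\<forall>I0. is_initial (cleft A) (cright A) I0 \<longrightarrow> Mob (lsrc A I0) = {} \<and> Mob (ltgt A I0) = {}) \<and>
     (\<forall>\<alpha> \<beta> \<sigma> c1 c2. is_coproduct (cleft A) (cright A) (ccomp A) \<alpha> \<beta> \<sigma> c1 c2 \<longrightarrow>
        set_coproduct (Mob (lsrc A \<alpha>)) (Mob (lsrc A \<beta>)) (Mob (lsrc A \<sigma>)) (Mt (ctop A c1)) (Mt (ctop A c2)) \<and>
        set_coproduct (Mob (ltgt A \<alpha>)) (Mob (ltgt A \<beta>)) (Mob (ltgt A \<sigma>)) (Mt (cbot A c1)) (Mt (cbot A c2)))"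

definition symmetric_multicategory ::
  "('o, 't, 'l, 'c, 'z) dbl_scheme \<Rightarrow> ('o \<Rightarrow> 'e set) \<Rightarrow> ('t \<Rightarrow> 'e \<Rightarrow> 'e) \<Rightarrow> ('l \<Rightarrow> 'e \<Rightarrow> 'e) \<Rightarrow> bool" where
  "symmetric_multicategory A Mob Mt Ml \<longleftrightarrow>
     double_category A \<and>
     has_finite_sums (tdom A) (tcod A) (tcomp A) \<and>
     has_finite_sums (cleft A) (cright A) (ccomp A) \<and>
     preserves_sums (cleft A) (cright A) (ccomp A) (tdom A) (tcod A) (tcomp A) (lsrc A) (ctop A) \<and>
     preserves_sums (cleft A) (cright A) (ccomp A) (tdom A) (tcod A) (tcomp A) (ltgt A) (cbot A) \<and>
     double_functor_to_Pb A Mob Mt Ml \<and>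
     M_preserves_sums A Mob Mt \<and>
     M0_discrete_fibration A Mob Mt \<and>
     M1_discrete_fibration A Mob Mt Ml"

text \<open>push f h \<alpha> is the covariant reindexing f^h_! \<alpha>; it is only constrained when
  reindex_ok holds, i.e. \<alpha> : X \<rightarrow> Z, f : X \<rightarrow> Y, h : M_0 Y \<rightarrow> M_0 Z with h \<circ> M_0 f = M_l \<alpha>.\<close>
definition reindex_ok ::
  "('o, 't, 'l, 'c, 'z) dbl_scheme \<Rightarrow> ('o \<Rightarrow> 'e set) \<Rightarrow> ('t \<Rightarrow> 'e \<Rightarrow> 'e) \<Rightarrow> ('l \<Rightarrow> 'e \<Rightarrow> 'e) \<Rightarrow>
   't \<Rightarrow> ('e \<Rightarrow> 'e) \<Rightarrow> 'l \<Rightarrow> bool" where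
  "reindex_ok A Mob Mt Ml f h \<alpha> \<longleftrightarrow>
     lsrc A \<alpha> = tdom A f \<and> h \<in> Mob (tcod A f) \<rightarrow>\<^sub>E Mob (ltgt A \<alpha>) \<and>
     compose (Mob (tdom A f)) h (Mt f) = Ml \<alpha>"

definition cartesian_multicategory ::
  "('o, 't, 'l, 'c, 'z) dbl_scheme \<Rightarrow> ('o \<Rightarrow> 'e set) \<Rightarrow> ('t \<Rightarrow> 'e \<Rightarrow> 'e) \<Rightarrow> ('l \<Rightarrow> 'e \<Rightarrow> 'e) \<Rightarrow>
   ('t \<Rightarrow> ('e \<Rightarrow> 'e) \<Rightarrow> 'l \<Rightarrow> 'l) \<Rightarrow> bool" where
  "cartesian_multicategory A Mob Mt Ml push \<longleftrightarrow>
     symmetric_multicategory A Mob Mt Ml \<and>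
     \<comment> \<open>typing of f^h_! \<alpha>\<close>
     (\<forall>f h \<alpha>. reindex_ok A Mob Mt Ml f h \<alpha> \<longrightarrow>
        lsrc A (push f h \<alpha>) = tcod A f \<and> ltgt A (push f h \<alpha>) = ltgt A \<alpha> \<and> Ml (push f h \<alpha>) = h) \<and>
     \<comment> \<open>(U)\<close>
     (\<forall>\<alpha>. push (tid A (lsrc A \<alpha>)) (Ml \<alpha>) \<alpha> = \<alpha>) \<and>
     \<comment> \<open>(Functoriality)\<close>
     (\<forall>\<alpha> g f h' h. lsrc A \<alpha> = tdom A g \<and> tcod A g = tdom A f \<and>
        h' \<in> Mob (tcod A g) \<rightarrow>\<^sub>E Mob (ltgt A \<alpha>) \<and> compose (Mob (tdom A g)) h' (Mt g) = Ml \<alpha> \<and>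
        h \<in> Mob (tcod A f) \<rightarrow>\<^sub>E Mob (ltgt A \<alpha>) \<and> compose (Mob (tdom A f)) h (Mt f) = h' \<longrightarrow>
        push f h (push g h' \<alpha>) = push (tcomp A f g) h \<alpha>) \<and>
     \<comment> \<open>(Frobenius): cell c with left \<gamma>, right \<alpha>, top k, bottom g\<close>
     (\<forall>c \<beta> m. ltgt A (cleft A c) = lsrc A \<beta> \<and>
        m \<in> Mob (ltgt A (cright A c)) \<rightarrow>\<^sub>E Mob (ltgt A \<beta>) \<and>
        compose (Mob (ltgt A (cleft A c))) m (Mt (cbot A c)) = Ml \<beta> \<longrightarrow>
        push (ctop A c) (compose (Mob (lsrc A (cright A c))) m (Ml (cright A c))) (lcomp A \<beta> (cleft A c))
          = lcomp A (push (cbot A c) m \<beta>) (cright A c)) \<and>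
     \<comment> \<open>(Tailing)\<close>
     (\<forall>\<alpha> f m \<beta>. lsrc A \<alpha> = tdom A f \<and> m \<in> Mob (tcod A f) \<rightarrow>\<^sub>E Mob (ltgt A \<alpha>) \<and>
        compose (Mob (tdom A f)) m (Mt f) = Ml \<alpha> \<and> lsrc A \<beta> = ltgt A \<alpha> \<longrightarrow>
        push f (compose (Mob (tcod A f)) (Ml \<beta>) m) (lcomp A \<beta> \<alpha>) = lcomp A \<beta> (push f m \<alpha>)) \<and>
     \<comment> \<open>(Beck--Chevalley)\<close>
     (\<forall>\<alpha> f h c1 c2 f'. reindex_ok A Mob Mt Ml f h \<alpha> \<and>
        cright A c1 = \<alpha> \<and> cright A c2 = push f h \<alpha> \<and> cbot A c1 = cbot A c2 \<and>
        tdom A f' = lsrc A (cleft A c1) \<and> tcod A f' = lsrc A (cleft A c2) \<and>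
        tcomp A (ctop A c2) f' = tcomp A f (ctop A c1) \<and>
        compose (Mob (tdom A f')) (Ml (cleft A c2)) (Mt f') = Ml (cleft A c1) \<longrightarrow>
        cleft A c2 = push f' (Ml (cleft A c2)) (cleft A c1))"

end

theory Submission
  imports Defs
begin

theorem proposition4p20:
  fixes A :: "('o, 't, 'l, 'c, 'z) dbl_scheme"
    and Mob :: "'o \<Rightarrow> 'e set" and Mt :: "'t \<Rightarrow> 'e \<Rightarrow> 'e" and Ml :: "'l \<Rightarrow> 'e \<Rightarrow> 'e"
    and push :: "'t \<Rightarrow> ('e \<Rightarrow> 'e) \<Rightarrow> 'l \<Rightarrow> 'l"
    and \<alpha> :: 'l and f g :: 't
  assumes cart: "cartesian_multicategory A Mob Mt Ml push"
    and alpha_src: "lsrc A \<alpha> = tdom A f"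
    and bij: "bij_betw (Mt f) (Mob (tdom A f)) (Mob (tcod A f))"
    and g_dom: "tdom A g = tcod A f" and g_cod: "tcod A g = tdom A f"
    and gf: "tcomp A g f = tid A (tdom A f)" and fg: "tcomp A f g = tid A (tcod A f)"
  shows "(\<exists>!c. cright A c = \<alpha> \<and> ctop A c = g \<and> cbot A c = tid A (ltgt A \<alpha>)) \<and>
         (\<forall>c. cright A c = \<alpha> \<and> ctop A c = g \<and> cbot A c = tid A (ltgt A \<alpha>) \<longrightarrow>
              cleft A c = push f (compose (Mob (tcod A f)) (Ml \<alpha>) (inv_into (Mob (tdom A f)) (Mt f))) \<alpha>)"
proof -
  define X where "X = tdom A f"
  define Y where "Y = tcod A f"
  define Z where "Z = ltgt A \<alpha>"
  have sm: "symmetric_multicategory A Mob Mt Ml" using cart unfolding cartesian_multicategory_def by blast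
  have dc: "double_category A" using sm unfolding symmetric_multicategory_def by blast
  have F: "double_functor_to_Pb A Mob Mt Ml" using sm unfolding symmetric_multicategory_def by blast
  have M0: "M0_discrete_fibration A Mob Mt" using sm unfolding symmetric_multicategory_def by blast
  have M1: "M1_discrete_fibration A Mob Mt Ml" using sm unfolding symmetric_multicategory_def by blast
  have ftop: "is_functor (cleft A) (cright A) (ccomp A) (cid A) (tdom A) (tcod A) (tcomp A) (tid A) (lsrc A) (ctop A)"
    using dc unfolding double_category_def by blast
  have fbot: "is_functor (cleft A) (cright A) (ccomp A) (cid A) (tdom A) (tcod A) (tcomp A) (tid A) (ltgt A) (cbot A)"
    using dc unfolding double_category_def by blast
  have ccat: "category (cleft A) (cright A) (ccomp A) (cid A)"
    using dc unfolding double_category_def by blast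
  have tcat: "category (tdom A) (tcod A) (tcomp A) (tid A)"
    using dc unfolding double_category_def by blast
  have top_dom: "\<And>c. tdom A (ctop A c) = lsrc A (cleft A c) \<and> tcod A (ctop A c) = lsrc A (cright A c)"
    using ftop unfolding is_functor_def by blast
  have bot_dom: "\<And>c. tdom A (cbot A c) = ltgt A (cleft A c) \<and> tcod A (cbot A c) = ltgt A (cright A c)"
    using fbot unfolding is_functor_def by blast
  have cidb: "\<And>d. cbot A (cid A d) = tid A (ltgt A d)" "\<And>d. ctop A (cid A d) = tid A (lsrc A d)"
    using fbot ftop unfolding is_functor_def by blast+
  have cidlr: "\<And>d. cleft A (cid A d) = d \<and> cright A (cid A d) = d"
    using ccat unfolding category_def by blast
  have tid_dc: "\<And>W. tdom A (tid A W) = W \<and> tcod A (tid A W) = W"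
    using tcat unfolding category_def by blast
  have tid_l: "\<And>h. tcomp A (tid A (tcod A h)) h = h"
    using tcat unfolding category_def by blast
  have fin: "\<And>W. finite (Mob W)" using F unfolding double_functor_to_Pb_def by blast
  have Mt_ty: "\<And>h. Mt h \<in> Mob (tdom A h) \<rightarrow>\<^sub>E Mob (tcod A h)" using F unfolding double_functor_to_Pb_def by blast
  have Mt_comp: "\<And>h k. tcod A h = tdom A k \<Longrightarrow> Mt (tcomp A k h) = compose (Mob (tdom A h)) (Mt k) (Mt h)"
    using F unfolding double_functor_to_Pb_def by blast
  have Mt_id: "\<And>W. Mt (tid A W) = restrict id (Mob W)" using F unfolding double_functor_to_Pb_def by blast
  have Ml_ty: "\<And>a. Ml a \<in> Mob (lsrc A a) \<rightarrow>\<^sub>E Mob (ltgt A a)" using F unfolding double_functor_to_Pb_def by blast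
  have pb: "\<And>c. is_pullback (Mob (lsrc A (cleft A c))) (Mob (ltgt A (cleft A c)))
                      (Mob (lsrc A (cright A c))) (Mob (ltgt A (cright A c)))
                      (Ml (cleft A c)) (Ml (cright A c)) (Mt (ctop A c)) (Mt (cbot A c))"
    using F unfolding double_functor_to_Pb_def by blast
  have M0u: "\<And>Y I u f1 f2. tcod A f1 = Y \<Longrightarrow> Mob (tdom A f1) = I \<Longrightarrow> Mt f1 = u \<Longrightarrow>
      tcod A f2 = Y \<Longrightarrow> Mob (tdom A f2) = I \<Longrightarrow> Mt f2 = u \<Longrightarrow> f1 = f2"
  proof -
    fix Y I u f1 f2
    assume a: "tcod A f1 = Y" "Mob (tdom A f1) = I" "Mt f1 = u" "tcod A f2 = Y" "Mob (tdom A f2) = I" "Mt f2 = u"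
    have "finite I" "u \<in> I \<rightarrow>\<^sub>E Mob Y" using a fin Mt_ty by metis+
    then have "\<exists>!f. tcod A f = Y \<and> Mob (tdom A f) = I \<and> Mt f = u"
      using M0[unfolded M0_discrete_fibration_def, rule_format] by blast
    then show "f1 = f2" using a by blast
  qed
  have gty: "Mt g \<in> Mob Y \<rightarrow>\<^sub>E Mob X" using Mt_ty[of g] g_dom g_cod X_def Y_def by simp
  have fty: "Mt f \<in> Mob X \<rightarrow>\<^sub>E Mob Y" using Mt_ty[of f] X_def Y_def by simp
  have fgid: "\<And>y. y \<in> Mob Y \<Longrightarrow> Mt f (Mt g y) = y"
  proof -
    fix y assume y: "y \<in> Mob Y"
    have "Mt (tcomp A f g) y = y" using fg Mt_id y Y_def by simp
    moreover have "Mt (tcomp A f g) = compose (Mob Y) (Mt f) (Mt g)" using Mt_comp[of g f] g_cod g_dom Y_def by simp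
    ultimately show "Mt f (Mt g y) = y" using y by (simp add: compose_def)
  qed
  have gfid: "\<And>x. x \<in> Mob X \<Longrightarrow> Mt g (Mt f x) = x"
  proof -
    fix x assume x: "x \<in> Mob X"
    have "Mt (tcomp A g f) x = x" using gf Mt_id x X_def by simp
    moreover have "Mt (tcomp A g f) = compose (Mob X) (Mt g) (Mt f)" using Mt_comp[of f g] g_cod g_dom X_def by simp
    ultimately show "Mt g (Mt f x) = x" using x by (simp add: compose_def)
  qed
  have ginv: "\<And>y. y \<in> Mob Y \<Longrightarrow> inv_into (Mob X) (Mt f) y = Mt g y"
  proof -
    fix y assume y: "y \<in> Mob Y"
    have gy: "Mt g y \<in> Mob X" using gty y by blast
    have "inj_on (Mt f) (Mob X)" using bij X_def bij_betw_def by blast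
    then show "inv_into (Mob X) (Mt f) y = Mt g y" using inv_into_f_f[OF _ gy] fgid[OF y] by metis
  qed
  define h where "h = compose (Mob Y) (Ml \<alpha>) (inv_into (Mob X) (Mt f))"
  have h_eq: "h = compose (Mob Y) (Ml \<alpha>) (Mt g)"
    unfolding h_def compose_def using ginv by (auto intro!: ext)
  have Mla: "Ml \<alpha> \<in> Mob X \<rightarrow>\<^sub>E Mob Z" using Ml_ty[of \<alpha>] alpha_src X_def Z_def by simp
  have hty: "h \<in> Mob Y \<rightarrow>\<^sub>E Mob Z" unfolding h_eq using gty Mla by (auto simp: compose_def)
  have PB: "is_pullback (Mob Y) (Mob Z) (Mob (lsrc A \<alpha>)) (Mob (ltgt A \<alpha>)) h (Ml \<alpha>) (Mt g) (Mt (tid A Z))"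
  proof -
    have 1: "\<forall>i\<in>Mob Y. Ml \<alpha> (Mt g i) = Mt (tid A Z) (h i)"
      using hty Mt_id by (auto simp: h_eq compose_def)
    have inj: "inj_on (\<lambda>i. (h i, Mt g i)) (Mob Y)"
      by (rule inj_onI) (metis fgid prod.inject)
    have img: "(\<lambda>i. (h i, Mt g i)) ` Mob Y = {(j, x). j \<in> Mob Z \<and> x \<in> Mob X \<and> Mt (tid A Z) j = Ml \<alpha> x}"
    proof
      show "(\<lambda>i. (h i, Mt g i)) ` Mob Y \<subseteq> {(j, x). j \<in> Mob Z \<and> x \<in> Mob X \<and> Mt (tid A Z) j = Ml \<alpha> x}"
        using hty gty Mt_id by (auto simp: h_eq compose_def)
    next
      show "{(j, x). j \<in> Mob Z \<and> x \<in> Mob X \<and> Mt (tid A Z) j = Ml \<alpha> x} \<subseteq> (\<lambda>i. (h i, Mt g i)) ` Mob Y"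
      proof
        fix p assume "p \<in> {(j, x). j \<in> Mob Z \<and> x \<in> Mob X \<and> Mt (tid A Z) j = Ml \<alpha> x}"
        then obtain j x where p: "p = (j, x)" "j \<in> Mob Z" "x \<in> Mob X" "Mt (tid A Z) j = Ml \<alpha> x" by blast
        have fx: "Mt f x \<in> Mob Y" using fty p(3) by blast
        have "h (Mt f x) = j" using p Mt_id fx gfid by (simp add: h_eq compose_def)
        then show "p \<in> (\<lambda>i. (h i, Mt g i)) ` Mob Y" using p fx gfid by (metis (no_types, lifting) image_eqI)
      qed
    qed
    show ?thesis unfolding is_pullback_def using 1 inj img alpha_src X_def Z_def
      by (simp add: bij_betw_def)
  qed
  have M1e: "\<exists>!c. cright A c = \<alpha> \<and> Mob (lsrc A (cleft A c)) = Mob Y \<and> Mob (ltgt A (cleft A c)) = Mob Z \<and>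
              Ml (cleft A c) = h \<and> Mt (ctop A c) = Mt g \<and> Mt (cbot A c) = Mt (tid A Z)"
  proof -
    have "restrict id (Mob Z) \<in> Mob Z \<rightarrow>\<^sub>E Mob Z" by auto
    then have "Mt (tid A Z) \<in> Mob Z \<rightarrow>\<^sub>E Mob (ltgt A \<alpha>)" using Mt_id Z_def by simp
    moreover have "Mt g \<in> Mob Y \<rightarrow>\<^sub>E Mob (lsrc A \<alpha>)" using gty alpha_src X_def by simp
    ultimately show ?thesis
      by (intro M1[unfolded M1_discrete_fibration_def, rule_format]) (use PB fin hty in auto)
  qed
  have char: "\<And>c. cright A c = \<alpha> \<Longrightarrow> ctop A c = g \<Longrightarrow> cbot A c = tid A Z \<Longrightarrow>
      Mob (lsrc A (cleft A c)) = Mob Y \<and> Mob (ltgt A (cleft A c)) = Mob Z \<and>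
              Ml (cleft A c) = h \<and> Mt (ctop A c) = Mt g \<and> Mt (cbot A c) = Mt (tid A Z)"
  proof -
    fix c assume c: "cright A c = \<alpha>" "ctop A c = g" "cbot A c = tid A Z"
    have sY: "lsrc A (cleft A c) = Y" using top_dom[of c] c g_dom Y_def by simp
    have sZ: "ltgt A (cleft A c) = Z" using bot_dom[of c] c tid_dc by simp
    note P = pb[of c]
    have "Ml (cleft A c) = h"
    proof (rule ext)
      fix i
      show "Ml (cleft A c) i = h i"
      proof (cases "i \<in> Mob Y")
        case True
        have "Ml \<alpha> (Mt g i) = Mt (tid A Z) (Ml (cleft A c) i)"
          using P True c sY unfolding is_pullback_def by simp
        moreover have "Ml (cleft A c) i \<in> Mob Z" using Ml_ty[of "cleft A c"] sY sZ True by auto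
        ultimately show ?thesis using True Mt_id by (simp add: h_eq compose_def)
      next
        case False
        then show ?thesis using Ml_ty[of "cleft A c"] sY hty by (auto simp: PiE_def extensional_def)
      qed
    qed
    then show "Mob (lsrc A (cleft A c)) = Mob Y \<and> Mob (ltgt A (cleft A c)) = Mob Z \<and>
              Ml (cleft A c) = h \<and> Mt (ctop A c) = Mt g \<and> Mt (cbot A c) = Mt (tid A Z)"
      using sY sZ c by simp
  qed
  obtain c0 where c0: "cright A c0 = \<alpha>" "Mob (lsrc A (cleft A c0)) = Mob Y" "Mob (ltgt A (cleft A c0)) = Mob Z"
              "Ml (cleft A c0) = h" "Mt (ctop A c0) = Mt g" "Mt (cbot A c0) = Mt (tid A Z)"
    using M1e by blast
  have c0top: "ctop A c0 = g"
    by (rule M0u[of _ "tdom A f" "Mob Y" "Mt g"]) (use top_dom[of c0] c0 g_cod g_dom alpha_src Y_def in auto)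
  have c0bot: "cbot A c0 = tid A Z"
    by (rule M0u[of _ Z "Mob Z" "Mt (tid A Z)"]) (use bot_dom[of c0] c0 tid_dc Z_def in auto)
  have part1: "\<exists>!c. cright A c = \<alpha> \<and> ctop A c = g \<and> cbot A c = tid A (ltgt A \<alpha>)"
  proof (rule ex1I[of _ c0])
    show "cright A c0 = \<alpha> \<and> ctop A c0 = g \<and> cbot A c0 = tid A (ltgt A \<alpha>)" using c0 c0top c0bot Z_def by simp
  next
    fix c assume "cright A c = \<alpha> \<and> ctop A c = g \<and> cbot A c = tid A (ltgt A \<alpha>)"
    then have "cright A c = \<alpha>" "ctop A c = g" "cbot A c = tid A Z" using Z_def by auto
    from char[OF this] \<open>cright A c = \<alpha>\<close> have "cright A c = \<alpha> \<and> Mob (lsrc A (cleft A c)) = Mob Y \<and> Mob (ltgt A (cleft A c)) = Mob Z \<and>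
              Ml (cleft A c) = h \<and> Mt (ctop A c) = Mt g \<and> Mt (cbot A c) = Mt (tid A Z)" by simp
    then show "c = c0" using M1e c0 by blast
  qed
  have ok: "reindex_ok A Mob Mt Ml f h \<alpha>"
  proof -
    have "compose (Mob X) h (Mt f) = Ml \<alpha>"
    proof (rule ext)
      fix x show "compose (Mob X) h (Mt f) x = Ml \<alpha> x"
      proof (cases "x \<in> Mob X")
        case True
        then show ?thesis using fty gfid by (auto simp: h_eq compose_def)
      next
        case False then show ?thesis using Mla by (auto simp: compose_def PiE_def extensional_def)
      qed
    qed
    then show ?thesis unfolding reindex_ok_def using alpha_src hty X_def Y_def Z_def by simp
  qed
  have cty: "lsrc A (push f h \<alpha>) = Y \<and> ltgt A (push f h \<alpha>) = Z \<and> Ml (push f h \<alpha>) = h"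
  proof -
    have T: "\<forall>f h \<alpha>. reindex_ok A Mob Mt Ml f h \<alpha> \<longrightarrow>
        lsrc A (push f h \<alpha>) = tcod A f \<and> ltgt A (push f h \<alpha>) = ltgt A \<alpha> \<and> Ml (push f h \<alpha>) = h"
      using cart unfolding cartesian_multicategory_def by (elim conjE) assumption
    show ?thesis using T[rule_format, OF ok] Y_def Z_def by simp
  qed
  have U0: "\<forall>a. push (tid A (lsrc A a)) (Ml a) a = a" using cart unfolding cartesian_multicategory_def by (elim conjE) assumption
  note U = U0[rule_format]
  have BC0: "\<forall>\<alpha> f h c1 c2 f'. reindex_ok A Mob Mt Ml f h \<alpha> \<and>
        cright A c1 = \<alpha> \<and> cright A c2 = push f h \<alpha> \<and> cbot A c1 = cbot A c2 \<and>
        tdom A f' = lsrc A (cleft A c1) \<and> tcod A f' = lsrc A (cleft A c2) \<and>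
        tcomp A (ctop A c2) f' = tcomp A f (ctop A c1) \<and>
        compose (Mob (tdom A f')) (Ml (cleft A c2)) (Mt f') = Ml (cleft A c1) \<longrightarrow>
        cleft A c2 = push f' (Ml (cleft A c2)) (cleft A c1)"
    using cart unfolding cartesian_multicategory_def by (elim conjE) assumption
  note BC = BC0[rule_format]
  have part2: "\<forall>c. cright A c = \<alpha> \<and> ctop A c = g \<and> cbot A c = tid A (ltgt A \<alpha>) \<longrightarrow>
              cleft A c = push f h \<alpha>"
  proof (intro allI impI)
    fix c assume "cright A c = \<alpha> \<and> ctop A c = g \<and> cbot A c = tid A (ltgt A \<alpha>)"
    then have c: "cright A c = \<alpha>" "ctop A c = g" "cbot A c = tid A Z" using Z_def by auto
    have sY: "lsrc A (cleft A c) = Y" using top_dom[of c] c g_dom Y_def by simp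
    have Mlc: "Ml (cleft A c) = h" using char[OF c] by simp
    let ?d = "push f h \<alpha>"
    have e: "cleft A (cid A ?d) = push (tid A Y) (Ml (cleft A (cid A ?d))) (cleft A c)"
    proof (rule BC[of f h \<alpha> c "cid A ?d" "tid A Y"], (intro conjI)?)
      show "reindex_ok A Mob Mt Ml f h \<alpha>" by (rule ok)
      show "cright A c = \<alpha>" by (rule c(1))
      show "cright A (cid A ?d) = ?d" using cidlr by simp
      show "cbot A c = cbot A (cid A ?d)" using c cidb cty by simp
      show "tdom A (tid A Y) = lsrc A (cleft A c)" using tid_dc sY by simp
      show "tcod A (tid A Y) = lsrc A (cleft A (cid A ?d))" using tid_dc cidlr cty by simp
      show "tcomp A (ctop A (cid A ?d)) (tid A Y) = tcomp A f (ctop A c)"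
        using cidb cty c fg Y_def tid_l[of "tid A Y"] tid_dc by simp
      show "compose (Mob (tdom A (tid A Y))) (Ml (cleft A (cid A ?d))) (Mt (tid A Y)) = Ml (cleft A c)"
        using cidlr cty Mlc tid_dc Mt_id hty
        by (auto intro!: ext simp: compose_def PiE_def extensional_def)
    qed
    have "push (tid A Y) (Ml (cleft A c)) (cleft A c) = cleft A c" using U[of "cleft A c"] sY by simp
    then show "cleft A c = push f h \<alpha>" using e cidlr cty Mlc by simp
  qed
  show ?thesis using part1 part2 h_def X_def Y_def by simp
qed

end
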